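(* Let $B>0$, $C>0$ and $\gamma\in[0,1]$ be fixed. For $\alpha\in[0,1/2]$ define $$b_{a}(\alpha)=\frac{\left(-2\alpha^4+5\alpha^3-4\alpha^2+\alpha\right)\gamma+4\alpha^4-9\alpha^3+4\alpha^2}{2\alpha^3-4\alpha^2+1},$$ $$b_{h}(\alpha)=\frac{\left(2\alpha^4-5\alpha^3+4\alpha^2-\alpha\right)\gamma-4\alpha^4+10\alpha^3-6\alpha^2-\alpha+1}{2\alpha^3-4\alpha^2+1},$$ and set $B_{\mathrm{attacker}}(\alpha)=B\,b_a(\alpha)$, $B_{\mathrm{honest}}(\alpha)=B\,b_h(\alpha)$. For $M>0$ and $H>0$ let $\alpha=\frac{M}{H+M}$ and define $$\mathcal{U}^S(H)=B\,\frac{B_{\mathrm{honest}}(\alpha)}{(1-\alpha)B}\cdot\frac{B}{\left(B_{\mathrm{attacker}}(\alpha)+B_{\mathrm{honest}}(\alpha)\right)(H+M)}-C.$$ Then there exists $M_{\max}$ (depending on $\gamma$, $B$, $C$) such that, for $M>0$, there exists $H^*$ with $H^*>M$ and $\mathcal{U}^S(H^* )=0$ if and only if $M\le M_{\max}$.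
   Context: Model of selfish mining (in the sense of Eyal and Sirer) with elastic hash supply. $B$ is the expected reward per block, $C$ the expected cost of mining per unit of hash rate until some miner finds a block, $H$ the total hash rate of honest miners, $M$ the hash rate of the selfish-mining attacking pool, $\gamma$ the fraction of honest miners that mine on the attacking pool's block during a tie. $\alpha=M/(H+M)$ is the attacker's share of total hash rate. $B_{\mathrm{attacker}}$ and $B_{\mathrm{honest}}$ are the expected rewards of the attacker and honest miners per block discovery (including hidden ones), and $\mathcal{U}^S(H)$ is the honest miners' profit per unit hash rate under the selfish mining attack after difficulty adjustment. An equilibrium honest hash supply is a value $H^*$ with $\mathcal{U}^S(H^* )=0$. *)

theory Defs
  imports Complex_Main
begin

definition b_a :: "real \<Rightarrow> real \<Rightarrow> real" where
  "b_a \<gamma> \<alpha> =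
     ((-2*\<alpha>^4 + 5*\<alpha>^3 - 4*\<alpha>^2 + \<alpha>) * \<gamma> + 4*\<alpha>^4 - 9*\<alpha>^3 + 4*\<alpha>^2)
     / (2*\<alpha>^3 - 4*\<alpha>^2 + 1)"

definition b_h :: "real \<Rightarrow> real \<Rightarrow> real" where
  "b_h \<gamma> \<alpha> =
     ((2*\<alpha>^4 - 5*\<alpha>^3 + 4*\<alpha>^2 - \<alpha>) * \<gamma> - 4*\<alpha>^4 + 10*\<alpha>^3 - 6*\<alpha>^2 - \<alpha> + 1)
     / (2*\<alpha>^3 - 4*\<alpha>^2 + 1)"

definition B_attacker :: "real \<Rightarrow> real \<Rightarrow> real \<Rightarrow> real" where
  "B_attacker B \<gamma> \<alpha> = B * b_a \<gamma> \<alpha>"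

definition B_honest :: "real \<Rightarrow> real \<Rightarrow> real \<Rightarrow> real" where
  "B_honest B \<gamma> \<alpha> = B * b_h \<gamma> \<alpha>"

definition U_S :: "real \<Rightarrow> real \<Rightarrow> real \<Rightarrow> real \<Rightarrow> real \<Rightarrow> real" where
  "U_S B C \<gamma> M H =
     (let \<alpha> = M / (H + M) in
        B * (B_honest B \<gamma> \<alpha> / ((1 - \<alpha>) * B))
          * (B / ((B_attacker B \<gamma> \<alpha> + B_honest B \<gamma> \<alpha>) * (H + M))) - C)"

end

theory Submission
  imports Defs
begin

definition Nh :: "real \<Rightarrow> real \<Rightarrow> real" where
  "Nh \<gamma> a = (2*a^4 - 5*a^3 + 4*a^2 - a) * \<gamma> - 4*a^4 + 10*a^3 - 6*a^2 - a + 1"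

definition Sx :: "real \<Rightarrow> real" where
  "Sx a = a^3 - 2*a^2 - a + 1"

definition Dx :: "real \<Rightarrow> real" where
  "Dx a = 2*a^3 - 4*a^2 + 1"

definition ff :: "real \<Rightarrow> real \<Rightarrow> real" where
  "ff \<gamma> a = a * Nh \<gamma> a / ((1 - a) * Sx a)"

lemma Dx_pos: assumes "0 \<le> a" "a \<le> 1/2" shows "Dx a > 0"
proof -
  have "a*a \<le> 1/4" using assms mult_mono[of a "1/2" a "1/2"] by simp
  moreover have "a = 0 \<or> a*a*a > 0"
  proof (cases "a = 0")
    case False then have "a > 0" using assms by simp
    then show ?thesis by simp
  qed simp
  ultimately show ?thesis unfolding Dx_def power2_eq_square power3_eq_cube
    by auto
qed

lemma Sx_pos: assumes "0 \<le> a" "a \<le> 1/2" shows "Sx a > 0"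
proof -
  have "(1 - 2*a) * (1 + a) \<ge> 0" using assms by simp
  moreover have "a = 0 \<or> a*a*a > 0"
  proof (cases "a = 0")
    case False then have "a > 0" using assms by simp
    then show ?thesis by simp
  qed simp
  ultimately show ?thesis unfolding Sx_def power2_eq_square power3_eq_cube
    by (auto simp: algebra_simps)
qed

lemma ff_cont: "continuous_on {0..1/2} (ff \<gamma>)"
proof -
  have "\<forall>a\<in>{0..1/2}. (1 - a) * Sx a \<noteq> 0" using Sx_pos by force
  then show ?thesis unfolding ff_def Nh_def Sx_def
    by (intro continuous_intros) auto
qed

lemma ff_0: "ff \<gamma> 0 = 0" by (simp add: ff_def)
lemma ff_half: "ff \<gamma> (1/2) = 0" by (simp add: ff_def Nh_def eval_nat_numeral)
lemma ff_quarter: assumes "0 \<le> \<gamma>" "\<gamma> \<le> 1" shows "ff \<gamma> (1/4) > 0"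
proof -
  have "Nh \<gamma> (1/4) > 0" using assms by (simp add: Nh_def eval_nat_numeral)
  moreover have "Sx (1/4) > 0" by (rule Sx_pos) auto
  ultimately show ?thesis by (simp add: ff_def)
qed

lemma U_eq:
  assumes "B > 0" "M > 0" "H > M"
  shows "U_S B C \<gamma> M H = B * ff \<gamma> (M/(H+M)) / M - C"
proof -
  define a where "a = M/(H+M)"
  have a0: "0 < a" "a < 1/2" using assms by (auto simp: a_def field_simps)
  have D: "Dx a > 0" "Sx a > 0" using a0 Dx_pos Sx_pos by auto
  have T: "H + M = M / a" using assms by (simp add: a_def)
  have sum: "b_a \<gamma> a + b_h \<gamma> a = Sx a / Dx a"
    unfolding b_a_def b_h_def Sx_def Dx_def by (simp add: add_divide_distrib[symmetric]) (simp add: algebra_simps)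
  have bh: "b_h \<gamma> a = Nh \<gamma> a / Dx a" unfolding b_h_def Nh_def Dx_def by simp
  show ?thesis
  proof -
    have e1: "B * (B * x / ((1-a)*B)) * (B / ((B*y+B*x)*T)) = B*x/((1-a)*(y+x)*T)" for x y T
      using assms by (simp add: distrib_left[symmetric])
    have e2: "B * (Nh \<gamma> a / Dx a) / ((1-a) * (Sx a / Dx a) * (M / a)) = B * ff \<gamma> a / M"
      using assms a0 D unfolding ff_def by (simp add: field_simps)
    have "U_S B C \<gamma> M H = B * (B * b_h \<gamma> a / ((1-a)*B)) * (B / ((B*b_a \<gamma> a+B*b_h \<gamma> a)*(H+M))) - C"
      by (simp add: U_S_def a_def B_attacker_def B_honest_def Let_def)
    also have "\<dots> = B*b_h \<gamma> a/((1-a)*(b_a \<gamma> a+b_h \<gamma> a)*(H+M)) - C"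
      by (simp only: e1)
    also have "\<dots> = B * (Nh \<gamma> a / Dx a) / ((1-a) * (Sx a / Dx a) * (M / a)) - C"
      unfolding sum unfolding bh T by (rule refl)
    finally show ?thesis using e2 by (simp add: a_def)
  qed
qed

theorem theorem1:
  fixes B C \<gamma> :: real
  assumes "B > 0" and "C > 0" and "0 \<le> \<gamma>" and "\<gamma> \<le> 1"
  shows "\<exists>M_max::real. \<forall>M::real. M > 0 \<longrightarrow>
           ((\<exists>H. H > M \<and> U_S B C \<gamma> M H = 0) \<longleftrightarrow> M \<le> M_max)"
proof -
  obtain a0 where a0: "a0 \<in> {0..1/2}" and amax: "\<forall>y\<in>{0..1/2}. ff \<gamma> y \<le> ff \<gamma> a0"
    using continuous_attains_sup[OF compact_Icc _ ff_cont[of \<gamma>]] by auto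
  define m where "m = ff \<gamma> a0"
  have mpos: "m > 0" 
  proof -
    have "ff \<gamma> (1/4) \<le> ff \<gamma> a0" using amax by simp
    then show ?thesis using ff_quarter[OF assms(3,4)] unfolding m_def by linarith
  qed
  have a0ne: "a0 \<noteq> 0" "a0 \<noteq> 1/2" using mpos ff_0[of \<gamma>] ff_half[of \<gamma>] unfolding m_def by force+
  have a0r: "0 < a0" "a0 < 1/2" using a0 a0ne by auto
  show ?thesis
  proof (rule exI[of _ "B*m/C"], intro allI impI iffI)
    fix M :: real assume M: "M > 0"
    { assume "\<exists>H. H > M \<and> U_S B C \<gamma> M H = 0"
      then obtain H where H: "H > M" "U_S B C \<gamma> M H = 0" by auto
      define a where "a = M/(H+M)"
      have ar: "a \<in> {0..1/2}" using H M by (auto simp: a_def field_simps)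
      have "B * ff \<gamma> a / M = C" using U_eq[OF assms(1) M H(1), of C \<gamma>] H(2) by (simp add: a_def)
      then have "M = B * ff \<gamma> a / C" using M assms by (auto simp: field_simps)
      moreover have "ff \<gamma> a \<le> m" using amax ar m_def by auto
      ultimately show "M \<le> B*m/C" using assms by (simp add: divide_right_mono)
    }
    { assume MM: "M \<le> B*m/C"
      define t where "t = M*C/B"
      have t: "0 < t" "t \<le> m" using M MM assms by (auto simp: t_def field_simps)
      have cont: "continuous_on {0..a0} (ff \<gamma>)"
        using ff_cont continuous_on_subset a0r by (metis atLeastatMost_subset_iff order_refl less_imp_le)
      obtain x where x: "0 \<le> x" "x \<le> a0" "ff \<gamma> x = t"
        using IVT'[of "ff \<gamma>" 0 t a0, OF _ _ _ cont] t ff_0 a0r m_def by auto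
      have xr: "0 < x" "x < 1/2" using x t ff_0 a0r by (auto intro: le_neq_trans)
      define H where "H = M*(1-x)/x"
      have HM: "H + M = M/x" using xr by (simp add: H_def field_simps)
      have Hgt: "H > M" using xr M by (simp add: H_def field_simps)
      have ax: "M/(H+M) = x" using HM xr M by simp
      have "U_S B C \<gamma> M H = 0"
        using U_eq[OF assms(1) M Hgt, of C \<gamma>] ax x(3) M assms by (simp add: t_def)
      then show "\<exists>H. H > M \<and> U_S B C \<gamma> M H = 0" using Hgt by auto
    }
  qed
qed

end
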